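(* Let $p>1$, $q=\frac p{p-1}$, and let $f$ be a non-zero real smooth function on $\mathbb R^n$ with compact support. Then \[ K_f=\Big((n+p)\operatorname{vol}(L_f)\,a_1\Big)^{\frac1p}\,\ell_q^{-\frac1p}\ \Gamma_pL_f . \]
   Context: $\omega_k=\pi^{k/2}/\Gamma(\frac k2+1)$. For $\xi\in\mathbb R^n$, $\nabla_\xi f=\nabla f\cdot\xi$ and $\|\nabla_\xi f\|_p$ is its $L^p(\mathbb R^n)$ norm. $C_f^*(x)=\int_{\mathbb S^{n-1}}\|\nabla_\xi f\|_p^{-n-p}|\langle x,\xi\rangle|^p\,d\xi$, $C_f$ is its Legendre transform $C_f(y)=\sup_x\{\langle x,y\rangle-C_f^*(x)\}$, $K_f=\{x:C_f(x)\le1\}$, $L_f=\{\xi:\|\nabla_\xi f\|_p\le1\}$, $\ell_q=q^{-p/q}p^{-1}$. The $L_p$-centroid body $\Gamma_pK$ of a convex body $K$ has support function given by $h_{\Gamma_pK}(x)^p=\frac{1}{a_1\operatorname{vol}(K)}\int_K|\langle x,y\rangle|^pdy$, with $a_1=\frac{\omega_{n+p}}{\omega_2\omega_n\omega_{p-1}}$. *)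

theory Defs
  imports "HOL-Analysis.Analysis"
begin

coinductive smooth_fun :: "('a::euclidean_space \<Rightarrow> real) \<Rightarrow> bool" where
  "(\<forall>x. f differentiable (at x)) \<Longrightarrow>
   (\<forall>v. smooth_fun (\<lambda>x. frechet_derivative f (at x) v)) \<Longrightarrow> smooth_fun f"

text \<open>Volume of the unit ball in dimension k (k real): omega_k = pi^(k/2) / Gamma(k/2+1).\<close>
definition omega :: "real \<Rightarrow> real" where
  "omega k = pi powr (k / 2) / Gamma (k / 2 + 1)"

text \<open>Integral over the unit sphere S^{n-1} w.r.t. the standard (n-1)-dim. surface measure,
  expressed via the cone-measure identity: int_S g dsigma = n * int_{B^n} g(x/|x|) dx.\<close>
definition sphere_integral :: "('a::euclidean_space \<Rightarrow> real) \<Rightarrow> real" where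
  "sphere_integral g = real DIM('a) * (\<integral>x\<in>ball 0 1. g (x /\<^sub>R norm x) \<partial>lborel)"

definition dir_deriv :: "('a::euclidean_space \<Rightarrow> real) \<Rightarrow> 'a \<Rightarrow> 'a \<Rightarrow> real" where
  "dir_deriv f \<xi> x = frechet_derivative f (at x) \<xi>"

definition grad_norm :: "real \<Rightarrow> ('a::euclidean_space \<Rightarrow> real) \<Rightarrow> 'a \<Rightarrow> real" where
  "grad_norm p f \<xi> = (\<integral>x. \<bar>dir_deriv f \<xi> x\<bar> powr p \<partial>lborel) powr (1 / p)"

definition Cstar :: "real \<Rightarrow> ('a::euclidean_space \<Rightarrow> real) \<Rightarrow> 'a \<Rightarrow> real" where
  "Cstar p f x = sphere_integral (\<lambda>\<xi>. grad_norm p f \<xi> powr (- real DIM('a) - p) * \<bar>x \<bullet> \<xi>\<bar> powr p)"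

definition Cf :: "real \<Rightarrow> ('a::euclidean_space \<Rightarrow> real) \<Rightarrow> 'a \<Rightarrow> ereal" where
  "Cf p f y = (SUP x. ereal (x \<bullet> y - Cstar p f x))"

definition Kf :: "real \<Rightarrow> ('a::euclidean_space \<Rightarrow> real) \<Rightarrow> 'a set" where
  "Kf p f = {x. Cf p f x \<le> 1}"

definition Lf :: "real \<Rightarrow> ('a::euclidean_space \<Rightarrow> real) \<Rightarrow> 'a set" where
  "Lf p f = {\<xi>. grad_norm p f \<xi> \<le> 1}"

definition ell :: "real \<Rightarrow> real \<Rightarrow> real" where
  "ell p q = q powr (- p / q) / p"

definition a1 :: "real \<Rightarrow> nat \<Rightarrow> real" where
  "a1 p n = omega (real n + p) / (omega 2 * omega (real n) * omega (p - 1))"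

definition centroid_support :: "real \<Rightarrow> 'a::euclidean_space set \<Rightarrow> 'a \<Rightarrow> real" where
  "centroid_support p K x =
     ((\<integral>y\<in>K. \<bar>x \<bullet> y\<bar> powr p \<partial>lborel) / (a1 p DIM('a) * measure lborel K)) powr (1 / p)"

definition Lp_centroid_body :: "real \<Rightarrow> 'a::euclidean_space set \<Rightarrow> 'a set" where
  "Lp_centroid_body p K = {y. \<forall>x. x \<bullet> y \<le> centroid_support p K x}"

end

theory Submission
  imports Defs
begin


lemma nn_scale_subst:
  fixes K :: "'a::euclidean_space \<Rightarrow> ennreal"
  assumes [measurable]: "K \<in> borel_measurable borel" and t: "t > 0"
  shows "(\<integral>\<^sup>+y. K y \<partial>lborel) = ennreal (t ^ DIM('a)) * (\<integral>\<^sup>+u. K (t *\<^sub>R u) \<partial>lborel)"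
proof -
  have "(\<integral>\<^sup>+y. K y \<partial>lborel) = (\<integral>\<^sup>+y. K y \<partial>(density (distr lborel borel (\<lambda>x. 0 + t *\<^sub>R x)) (\<lambda>_. \<bar>t\<bar>^DIM('a))))"
  proof -
    have eq: "(lborel::'a measure) = density (distr lborel borel (\<lambda>x. 0 + t *\<^sub>R x)) (\<lambda>_. \<bar>t\<bar>^DIM('a))"
      by (rule lborel_affine) (use t in simp)
    show ?thesis using arg_cong[OF eq, of "\<lambda>M. integral\<^sup>N M K"] .
  qed
  also have "\<dots> = (\<integral>\<^sup>+u. ennreal (t ^ DIM('a)) * K (t *\<^sub>R u) \<partial>lborel)"
    using t by (simp add: nn_integral_density nn_integral_distr)
  also have "\<dots> = ennreal (t ^ DIM('a)) * (\<integral>\<^sup>+u. K (t *\<^sub>R u) \<partial>lborel)"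
    by (simp add: nn_integral_cmult)
  finally show ?thesis .
qed

lemma test_fub:
  fixes g :: "real \<Rightarrow> 'a::euclidean_space \<Rightarrow> ennreal"
  assumes "case_prod g \<in> borel_measurable (lborel \<Otimes>\<^sub>M lborel)"
  shows "(\<integral>\<^sup>+u. (\<integral>\<^sup>+t. g t u \<partial>lborel) \<partial>lborel) = (\<integral>\<^sup>+t. (\<integral>\<^sup>+u. g t u \<partial>lborel) \<partial>lborel)"
  by (rule lborel_pair.Fubini'[OF assms])

lemma pow_int:
  fixes a c :: real assumes "a > -1" "c \<ge> 0"
  shows "(\<integral>\<^sup>+t. ennreal (indicator {0..c} t * t powr a) \<partial>lborel) = ennreal (c powr (a+1) / (a+1))"
  using nn_integral_has_integral_lebesgue[OF _ has_integral_powr_from_0[OF assms]] by simp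

lemma pow_int_inf:
  fixes a e :: real assumes "e < -1" "a > 0"
  shows "(\<integral>\<^sup>+t. ennreal (indicator {a..} t * t powr e) \<partial>lborel) = ennreal (-(a powr (e+1)) / (e+1))"
  using nn_integral_has_integral_lebesgue[OF _ has_integral_powr_to_inf[OF assms]] assms by simp

lemma meas_test:
  fixes N \<phi> :: "'a::euclidean_space \<Rightarrow> real"
  assumes [measurable]: "N \<in> borel_measurable borel" "\<phi> \<in> borel_measurable borel"
  shows "(\<lambda>(t::real, u::'a). ennreal (if 0 \<le> t \<and> t * N u \<le> 1 \<and> norm u < 1 then e * t powr (e-1) * norm u powr n * \<phi> u else 0))
     \<in> borel_measurable (lborel \<Otimes>\<^sub>M lborel)"
  by measurable




lemma polar_core:
  fixes N \<phi> :: "'a::euclidean_space \<Rightarrow> real" and p :: real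
  assumes Nm [measurable]: "N \<in> borel_measurable borel" and \<phi>m [measurable]: "\<phi> \<in> borel_measurable borel"
    and Nsc: "\<And>c v. N (c *\<^sub>R v) = \<bar>c\<bar> * N v" and Npos: "\<And>v. v \<noteq> 0 \<Longrightarrow> N v > 0"
    and \<phi>nn: "\<And>v. \<phi> v \<ge> 0" and \<phi>sc: "\<And>c v. c > 0 \<Longrightarrow> \<phi> (c *\<^sub>R v) = c powr p * \<phi> v"
    and \<phi>0: "\<phi> 0 = 0" and p: "p > 0"
  shows "ennreal (real DIM('a)) * (\<integral>\<^sup>+u. ennreal (indicator (ball 0 1) u *
            (N (u /\<^sub>R norm u) powr (- real DIM('a) - p) * \<phi> (u /\<^sub>R norm u))) \<partial>lborel)
       = ennreal (real DIM('a) + p) * (\<integral>\<^sup>+y. ennreal (indicator {y. N y \<le> 1} y * \<phi> y) \<partial>lborel)"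
proof -
  define n where "n = real DIM('a)"
  define e where "e = n + p"
  have n: "n > 0" unfolding n_def by simp
  have e: "e > 0" "e > 1" using n p DIM_positive[where 'a='a] unfolding e_def n_def by linarith+
  have N0: "N 0 = 0" using Nsc[of 0 0] by simp
  have Nnn: "N v \<ge> 0" for v using Npos[of v] N0 by (cases "v = 0") auto
  define F where "F u = (if norm u < 1 then N u powr (-n-p) * norm u powr n * \<phi> u else 0)" for u
  define H where "H t u = ennreal (if 0 \<le> t \<and> t * N u \<le> 1 \<and> norm u < 1
      then e * t powr (e-1) * norm u powr n * \<phi> u else 0)" for t :: real and u :: 'a
  define J where "J t y = ennreal (if 0 < t \<and> norm y < t \<and> N y \<le> 1
      then e * t powr (-n-1) * norm y powr n * \<phi> y else 0)" for t :: real and y :: 'a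
  have Hm: "case_prod H \<in> borel_measurable (lborel \<Otimes>\<^sub>M lborel)"
    unfolding H_def[abs_def] by measurable
  have Jm: "case_prod J \<in> borel_measurable (lborel \<Otimes>\<^sub>M lborel)"
    unfolding J_def[abs_def] by measurable
  have Jm2[measurable]: "J t \<in> borel_measurable borel" for t
    unfolding J_def[abs_def] by measurable
  have step1: "ennreal (indicator (ball 0 1) u * (N (u /\<^sub>R norm u) powr (- n - p) * \<phi> (u /\<^sub>R norm u)))
      = ennreal (F u)" for u
  proof (cases "u = 0")
    case True then show ?thesis by (simp add: F_def N0 \<phi>0)
  next
    case False
    define r where "r = norm u"
    have r: "r > 0" using False unfolding r_def by simp
    have a: "N (u /\<^sub>R norm u) = N u / r" using Nsc[of "1/r" u] r unfolding r_def by (simp add: divide_inverse_commute)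
    have b: "\<phi> (u /\<^sub>R norm u) = r powr (-p) * \<phi> u" using \<phi>sc[of "1/r" u] r unfolding r_def
      by (simp add: powr_minus_divide divide_inverse_commute inverse_powr powr_minus)
    have c: "(N u / r) powr (-n-p) = N u powr (-n-p) * r powr (n+p)"
    proof -
      have 1: "(N u / r) powr (-n-p) = N u powr (-n-p) / r powr (-n-p)"
        using r Nnn[of u] by (intro powr_divide)
      have 2: "r powr (-n-p) = inverse (r powr (n+p))"
        using powr_minus[of r "n+p"] by simp
      show ?thesis unfolding 1 2 by (simp add: divide_inverse)
    qed
    have d: "r powr (n+p) * r powr (-p) = r powr n" using r by (simp add: powr_add[symmetric])
    have "N (u /\<^sub>R norm u) powr (- n - p) * \<phi> (u /\<^sub>R norm u) = N u powr (-n-p) * (r powr (n+p) * r powr (-p)) * \<phi> u"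
      unfolding a b c by (simp add: algebra_simps)
    also have "\<dots> = N u powr (-n-p) * r powr n * \<phi> u" using d by simp
    finally show ?thesis unfolding F_def r_def by (simp add: indicator_def)
  qed
  have step2: "ennreal (F u) = (\<integral>\<^sup>+t. H t u \<partial>lborel)" for u
  proof (cases "u = 0 \<or> norm u \<ge> 1")
    case True
    then have "H t u = 0" for t unfolding H_def using \<phi>0 n by auto
    moreover have "F u = 0" using True unfolding F_def using \<phi>0 by auto
    ultimately show ?thesis by simp
  next
    case False
    then have u: "u \<noteq> 0" "norm u < 1" by auto
    have Nu: "N u > 0" using Npos[OF u(1)] .
    define C where "C = e * norm u powr n * \<phi> u"
    have C: "C \<ge> 0" unfolding C_def using e \<phi>nn by simp
    have "H t u = ennreal C * ennreal (indicator {0..1/N u} t * t powr (e-1))" for t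
    proof -
      have "(0 \<le> t \<and> t * N u \<le> 1) = (t \<in> {0..1/N u})" using Nu by (auto simp: field_simps)
      then show ?thesis unfolding H_def C_def using u
        by (auto simp: indicator_def ennreal_mult'[symmetric] C_def[symmetric] C mult_ac)
    qed
    then have "(\<integral>\<^sup>+t. H t u \<partial>lborel) = ennreal C * (\<integral>\<^sup>+t. ennreal (indicator {0..1/N u} t * t powr (e-1)) \<partial>lborel)"
      by (simp add: nn_integral_cmult)
    also have "\<dots> = ennreal C * ennreal ((1/N u) powr e / e)"
      using pow_int[of "e-1" "1/N u"] e Nu by simp
    also have "\<dots> = ennreal (C * ((1/N u) powr e / e))" by (rule ennreal_mult[symmetric]) (use C e in auto)
    also have "C * ((1/N u) powr e / e) = F u"
    proof -
      have 1: "(1/N u) powr e = N u powr (-n-p)"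
        using Nu powr_minus_divide[of "N u" "n+p"] by (simp add: powr_divide e_def)
      have 2: "C * (X / e) = norm u powr n * \<phi> u * X" for X
        unfolding C_def using e by simp
      show ?thesis unfolding 1 2 F_def using u by simp
    qed
    finally show ?thesis ..
  qed
  have step4: "(\<integral>\<^sup>+u. H t u \<partial>lborel) = (\<integral>\<^sup>+y. J t y \<partial>lborel)" for t
  proof (cases "t > 0")
    case False
    then have "H t u = 0" for u unfolding H_def by (cases "t = 0") auto
    moreover have "J t y = 0" for y unfolding J_def using False by auto
    ultimately show ?thesis by simp
  next
    case True
    have pt: "H t u = ennreal (t ^ DIM('a)) * J t (t *\<^sub>R u)" for u
    proof -
      have tn: "t ^ DIM('a) = t powr n" unfolding n_def using True by (simp add: powr_realpow)
      have cond: "(0 \<le> t \<and> t * N u \<le> 1 \<and> norm u < 1) = (0 < t \<and> norm (t *\<^sub>R u) < t \<and> N (t *\<^sub>R u) \<le> 1)"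
        using True by (auto simp: Nsc)
      have val: "e * t powr (e-1) * norm u powr n * \<phi> u
          = t ^ DIM('a) * (e * t powr (-n-1) * norm (t *\<^sub>R u) powr n * \<phi> (t *\<^sub>R u))"
      proof -
        have 1: "norm (t *\<^sub>R u) powr n = t powr n * norm u powr n" using True by (simp add: powr_mult)
        have 2: "\<phi> (t *\<^sub>R u) = t powr p * \<phi> u" using \<phi>sc True by simp
        have 3: "t powr n * t powr (-n-1) * t powr n * t powr p = t powr (e-1)"
        proof -
          have "t powr n * t powr (-n-1) * t powr n * t powr p = t powr (n + (-n-1) + n + p)"
            by (simp only: powr_add)
          also have "n + (-n-1) + n + p = e - 1" unfolding e_def by simp
          finally show ?thesis .
        qed
        have 4: "t powr n * (e * t powr (-n-1) * (t powr n * a) * (t powr p * b))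
           = e * (t powr n * t powr (-n-1) * t powr n * t powr p) * a * b" for a b
          by (simp only: mult_ac)
        show ?thesis unfolding tn 1 2 4 3 ..
      qed
      define B where "B = (if 0 \<le> t \<and> t * N u \<le> 1 \<and> norm u < 1
        then e * t powr (-n-1) * norm (t *\<^sub>R u) powr n * \<phi> (t *\<^sub>R u) else 0)"
      have nn: "0 \<le> B"
        using e \<phi>nn unfolding B_def by simp
      have "H t u = ennreal (t ^ DIM('a) * B)" unfolding H_def B_def
        by (cases "0 \<le> t \<and> t * N u \<le> 1 \<and> norm u < 1") (simp_all only: val if_True if_False mult_zero_right simp_thms)
      also have "\<dots> = ennreal (t ^ DIM('a)) * ennreal B" by (rule ennreal_mult) (use True nn in auto)
      also have "ennreal B = J t (t *\<^sub>R u)" unfolding J_def B_def cond[symmetric] ..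
      finally show ?thesis .
    qed
    have "(\<integral>\<^sup>+y. J t y \<partial>lborel) = ennreal (t ^ DIM('a)) * (\<integral>\<^sup>+u. J t (t *\<^sub>R u) \<partial>lborel)"
      by (rule nn_scale_subst[OF Jm2 True])
    also have "\<dots> = (\<integral>\<^sup>+u. H t u \<partial>lborel)"
      unfolding pt by (rule nn_integral_cmult[symmetric]) measurable
    finally show ?thesis ..
  qed
  have step6: "(\<integral>\<^sup>+t. J t y \<partial>lborel) = ennreal (e / n) * ennreal (indicator {y. N y \<le> 1} y * \<phi> y)" for y
  proof (cases "y = 0 \<or> N y > 1")
    case True
    then have a: "J t y = 0" for t unfolding J_def using \<phi>0 n by auto
    have b: "indicator {y. N y \<le> 1} y * \<phi> y = 0" using True \<phi>0 by auto
    have "(\<integral>\<^sup>+t. J t y \<partial>lborel) = 0" using a by simp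
    then show ?thesis by (simp only: b ennreal_0 mult_zero_right)
  next
    case False
    then have y: "y \<noteq> 0" "N y \<le> 1" by auto
    define a where "a = norm y"
    have a: "a > 0" using y unfolding a_def by simp
    define C where "C = e * norm y powr n * \<phi> y"
    have C: "C \<ge> 0" unfolding C_def using e \<phi>nn by simp
    have "AE t in lborel. J t y = ennreal C * ennreal (indicator {a..} t * t powr (-n-1))"
      using AE_lborel_singleton[of a]
    proof eventually_elim
      case (elim t)
      show ?case
      proof (cases "a < t")
        case True
        then have t0: "t > 0" using a by simp
        show ?thesis using a y True t0 unfolding J_def C_def a_def
          by (auto simp: indicator_def ennreal_mult'[symmetric] C_def[symmetric] C mult_ac)
      next
        case False then show ?thesis using elim unfolding J_def a_def by (auto simp: indicator_def)
      qed
    qed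
    then have "(\<integral>\<^sup>+t. J t y \<partial>lborel) = (\<integral>\<^sup>+t. ennreal C * ennreal (indicator {a..} t * t powr (-n-1)) \<partial>lborel)"
      by (rule nn_integral_cong_AE)
    also have "\<dots> = ennreal C * ennreal (a powr (-n) / n)"
      using pow_int_inf[of "-n-1" a] n a by (simp add: nn_integral_cmult)
    also have "\<dots> = ennreal (C * (a powr (-n) / n))" by (rule ennreal_mult[symmetric]) (use C n in auto)
    also have "C * (a powr (-n) / n) = e / n * (indicator {y. N y \<le> 1} y * \<phi> y)"
    proof -
      have "norm y powr n * a powr (-n) = 1" unfolding a_def using a a_def
        by (simp add: powr_add[symmetric])
      then show ?thesis unfolding C_def using y by (simp add: field_simps)
    qed
    also have "ennreal (e / n * (indicator {y. N y \<le> 1} y * \<phi> y))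
       = ennreal (e / n) * ennreal (indicator {y. N y \<le> 1} y * \<phi> y)"
      by (rule ennreal_mult) (use e n \<phi>nn in auto)
    finally show ?thesis .
  qed
  have "(\<integral>\<^sup>+u. ennreal (indicator (ball 0 1) u * (N (u /\<^sub>R norm u) powr (- n - p) * \<phi> (u /\<^sub>R norm u))) \<partial>lborel)
      = (\<integral>\<^sup>+u. (\<integral>\<^sup>+t. H t u \<partial>lborel) \<partial>lborel)"
    by (simp add: step1 step2)
  also have "\<dots> = (\<integral>\<^sup>+t. (\<integral>\<^sup>+u. H t u \<partial>lborel) \<partial>lborel)"
    by (rule lborel_pair.Fubini'[OF Hm])
  also have "\<dots> = (\<integral>\<^sup>+t. (\<integral>\<^sup>+y. J t y \<partial>lborel) \<partial>lborel)"
    by (simp add: step4)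
  also have "\<dots> = (\<integral>\<^sup>+y. (\<integral>\<^sup>+t. J t y \<partial>lborel) \<partial>lborel)"
    by (rule lborel_pair.Fubini'[OF Jm, symmetric])
  also have "\<dots> = (\<integral>\<^sup>+y. ennreal (e / n) * ennreal (indicator {y. N y \<le> 1} y * \<phi> y) \<partial>lborel)"
    by (simp add: step6)
  also have "\<dots> = ennreal (e / n) * (\<integral>\<^sup>+y. ennreal (indicator {y. N y \<le> 1} y * \<phi> y) \<partial>lborel)"
    by (rule nn_integral_cmult) measurable
  finally have main: "(\<integral>\<^sup>+u. ennreal (indicator (ball 0 1) u * (N (u /\<^sub>R norm u) powr (- n - p) * \<phi> (u /\<^sub>R norm u))) \<partial>lborel)
      = ennreal (e / n) * (\<integral>\<^sup>+y. ennreal (indicator {y. N y \<le> 1} y * \<phi> y) \<partial>lborel)" .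
  have "ennreal n * ennreal (e / n) = ennreal e" using n e by (simp add: ennreal_mult'[symmetric])
  then show ?thesis unfolding n_def[symmetric] e_def[symmetric] main
    by (simp add: mult.assoc[symmetric])
qed




lemma legendre_aux:
  fixes h :: "'a::real_inner \<Rightarrow> real" and y :: 'a
  assumes p: "p > 1" and q: "q = p / (p - 1)" and c: "c > 0"
    and hnn: "\<And>x. h x \<ge> 0" and hsc: "\<And>t x. t > 0 \<Longrightarrow> h (t *\<^sub>R x) = t * h x"
  shows "(\<forall>x. x \<bullet> y - c * h x powr p \<le> 1) \<longleftrightarrow> (\<forall>x. x \<bullet> y \<le> ((c*p) powr (1/p) * q powr (1/q)) * h x)"
proof -
  define lam where "lam = (c*p) powr (1/p) * q powr (1/q)"
  have q1: "q > 1" using p q by (simp add: less_divide_eq)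
  have iq: "1/q = (p-1)/p" using p q by simp
  have pq: "1/p + 1/q = 1" unfolding iq using p by (simp add: field_simps)
  have young: "lam * s - c * s powr p \<le> 1" if s: "s \<ge> 0" for s
  proof -
    define a where "a = (c*p) powr (1/p) * s"
    define b where "b = q powr (1/q)"
    have a0: "a \<ge> 0" "b \<ge> 0" unfolding a_def b_def using s by auto
    have "a * b \<le> a powr p / p + b powr q / q"
      by (rule Youngs_inequality[OF p q1 pq a0])
    moreover have "a powr p = c * p * s powr p" unfolding a_def using p c s
      by (simp add: powr_mult powr_powr)
    moreover have "b powr q = q" unfolding b_def using q1 by (simp add: powr_powr)
    moreover have "a * b = lam * s" unfolding a_def b_def lam_def by simp
    ultimately show ?thesis using p q1 by simp
  qed
  define s0 where "s0 = (c * (p - 1)) powr (-(1/p))"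
  have s0: "s0 > 0" unfolding s0_def using c p by simp
  have cs0: "c * s0 powr p = 1 / (p - 1)"
  proof -
    have a: "s0 powr p = (c*(p-1)) powr (-(1/p) * p)" unfolding s0_def by (rule powr_powr)
    have b: "-(1/p) * p = -1" using p by simp
    have d: "(c*(p-1)) powr (-1) = 1/(c*(p-1))" using c p by (simp add: powr_minus_divide)
    show ?thesis unfolding a b d using c by simp
  qed
  have lams0: "lam * s0 = q"
  proof -
    have "(c*p) powr (1/p) * s0 = (c*p) powr (1/p) / (c*(p-1)) powr (1/p)"
      unfolding s0_def powr_minus_divide by simp
    also have "\<dots> = ((c*p) / (c*(p-1))) powr (1/p)"
      using c p by (intro powr_divide[symmetric])
    also have "(c*p) / (c*(p-1)) = q" using c q by simp
    finally have "(c*p) powr (1/p) * s0 = q powr (1/p)" .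
    then have "lam * s0 = q powr (1/p) * q powr (1/q)" unfolding lam_def by (simp add: mult_ac)
    also have "\<dots> = q powr (1/p + 1/q)" by (simp add: powr_add)
    also have "\<dots> = q" using pq q1 by simp
    finally show ?thesis .
  qed
  show ?thesis unfolding lam_def[symmetric]
  proof
    assume H: "\<forall>x. x \<bullet> y - c * h x powr p \<le> 1"
    show "\<forall>x. x \<bullet> y \<le> lam * h x"
    proof
      fix x
      show "x \<bullet> y \<le> lam * h x"
      proof (cases "h x = 0")
        case True
        show ?thesis
        proof (rule ccontr)
          assume "\<not> x \<bullet> y \<le> lam * h x"
          then have xy: "x \<bullet> y > 0" using True by simp
          define t where "t = 2 / (x \<bullet> y)"
          have t: "t > 0" unfolding t_def using xy by simp
          have "(t *\<^sub>R x) \<bullet> y - c * h (t *\<^sub>R x) powr p \<le> 1" using H by blast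
          moreover have "h (t *\<^sub>R x) = 0" using hsc[OF t] True by simp
          moreover have "(t *\<^sub>R x) \<bullet> y = 2" unfolding t_def using xy by simp
          ultimately show False by simp
        qed
      next
        case False
        then have hx: "h x > 0" using hnn[of x] by simp
        define t where "t = s0 / h x"
        have t: "t > 0" unfolding t_def using s0 hx by simp
        have "(t *\<^sub>R x) \<bullet> y - c * h (t *\<^sub>R x) powr p \<le> 1" using H by blast
        moreover have "h (t *\<^sub>R x) = s0" using hsc[OF t] hx unfolding t_def by simp
        ultimately have "t * (x \<bullet> y) \<le> 1 + 1 / (p - 1)" using cs0 by simp
        also have "1 + 1 / (p - 1) = q" using p q by (simp add: field_simps)
        finally have "t * (x \<bullet> y) \<le> q" .
        then have "x \<bullet> y \<le> q / t" using t by (simp add: field_simps)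
        also have "q / t = lam * h x" unfolding t_def using s0 hx lams0[symmetric]
          by (simp add: field_simps)
        finally show ?thesis .
      qed
    qed
  next
    assume H: "\<forall>x. x \<bullet> y \<le> lam * h x"
    show "\<forall>x. x \<bullet> y - c * h x powr p \<le> 1"
    proof
      fix x
      have "x \<bullet> y - c * h x powr p \<le> lam * h x - c * h x powr p" using H by simp
      also have "\<dots> \<le> 1" using young[OF hnn[of x]] .
      finally show "x \<bullet> y - c * h x powr p \<le> 1" .
    qed
  qed
qed




lemma smooth_diff: "smooth_fun f \<Longrightarrow> f differentiable (at x)"
  by (erule smooth_fun.cases) auto

lemma smooth_deriv: "smooth_fun f \<Longrightarrow> smooth_fun (\<lambda>x. frechet_derivative f (at x) v)"
  by (erule smooth_fun.cases) auto

lemma smooth_cont: "smooth_fun f \<Longrightarrow> continuous_on UNIV f"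
  by (meson continuous_at_imp_continuous_on differentiable_imp_continuous_within smooth_diff)

lemma smooth_hasderiv: "smooth_fun f \<Longrightarrow> (f has_derivative frechet_derivative f (at x)) (at x)"
  using frechet_derivative_works smooth_diff by blast

lemma smooth_linear: "smooth_fun f \<Longrightarrow> bounded_linear (frechet_derivative f (at x))"
  using smooth_hasderiv has_derivative_bounded_linear by blast

lemma deriv_zero_outside:
  fixes f :: "'a::euclidean_space \<Rightarrow> real"
  assumes "smooth_fun f" "x \<notin> closure {x. f x \<noteq> 0}"
  shows "frechet_derivative f (at x) v = 0"
proof -
  let ?U = "- closure {x. f x \<noteq> 0}"
  have o: "open ?U" by auto
  have "((\<lambda>x. 0::real) has_derivative (\<lambda>h. 0)) (at x)" by simp
  then have "(f has_derivative (\<lambda>h. 0)) (at x)"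
    apply (rule has_derivative_transform_within_open[OF _ o])
    using assms(2) apply simp
    by (metis (mono_tags, lifting) Compl_iff closure_subset mem_Collect_eq subsetD)
  then have "(\<lambda>h. 0) = frechet_derivative f (at x)"
    by (rule frechet_derivative_at)
  then show ?thesis by (metis)
qed

locale setting =
  fixes f :: "'a::euclidean_space \<Rightarrow> real" and p :: real
  assumes p: "p > 1" and sm: "smooth_fun f" and cpt: "compact (closure {x. f x \<noteq> 0})"
    and nz: "\<exists>x. f x \<noteq> 0"
begin

definition "S0 = closure {x. f x \<noteq> 0}"
definition "D x v = frechet_derivative f (at x) v"
definition "I v = (\<integral>x. \<bar>D x v\<bar> powr p \<partial>lborel)"

lemma cptS: "compact S0" using cpt S0_def by simp

lemma D_zero: "x \<notin> S0 \<Longrightarrow> D x v = 0"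
  unfolding D_def S0_def using deriv_zero_outside[OF sm] by blast

lemma D_bl: "bounded_linear (D x)"
  unfolding D_def[abs_def] using smooth_linear[OF sm] by simp

lemma D_lin: "D x v = (\<Sum>b\<in>Basis. (v \<bullet> b) * D x b)"
proof -
  interpret bounded_linear "D x" by (rule D_bl)
  have "D x v = D x (\<Sum>b\<in>Basis. (v \<bullet> b) *\<^sub>R b)" by (simp add: euclidean_representation)
  also have "\<dots> = (\<Sum>b\<in>Basis. (v \<bullet> b) * D x b)" by (simp add: sum scale)
  finally show ?thesis .
qed

lemma D_scale: "D x (c *\<^sub>R v) = c * D x v"
proof -
  interpret bounded_linear "D x" by (rule D_bl)
  show ?thesis by (simp add: scale)
qed

lemma D_cont: "continuous_on UNIV (\<lambda>x. D x v)"
  unfolding D_def using smooth_cont[OF smooth_deriv[OF sm]] .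

lemma D_bound: "\<exists>M\<ge>0. \<forall>x v. \<bar>D x v\<bar> \<le> M * norm v"
proof -
  let ?g = "\<lambda>x. \<Sum>b\<in>Basis. \<bar>D x b\<bar>"
  have "continuous_on UNIV ?g" by (intro continuous_intros D_cont)
  then have "compact (?g ` S0)" using cptS
    by (meson compact_continuous_image continuous_on_subset subset_UNIV)
  then obtain M where M: "\<And>y. y \<in> ?g ` S0 \<Longrightarrow> norm y \<le> M" "M > 0"
    by (meson bounded_pos compact_imp_bounded)
  have gM: "?g x \<le> M" for x
  proof (cases "x \<in> S0")
    case True then show ?thesis using M(1)[of "?g x"] by auto
  next
    case False then show ?thesis using D_zero M(2) by simp
  qed
  have "\<bar>D x v\<bar> \<le> M * norm v" for x v
  proof -
    have "\<bar>D x v\<bar> \<le> (\<Sum>b\<in>Basis. \<bar>(v \<bullet> b) * D x b\<bar>)"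
      by (subst D_lin) (rule sum_abs)
    also have "\<dots> \<le> (\<Sum>b\<in>Basis. norm v * \<bar>D x b\<bar>)"
      by (intro sum_mono) (simp add: abs_mult Basis_le_norm mult_right_mono)
    also have "\<dots> = norm v * ?g x" by (simp add: sum_distrib_left)
    also have "\<dots> \<le> norm v * M" using gM by (simp add: mult_left_mono)
    finally show ?thesis by (simp add: mult.commute)
  qed
  then show ?thesis using M(2) by (intro exI[of _ M]) auto
qed

lemma powp_cont: "continuous_on UNIV (\<lambda>t::real. \<bar>t\<bar> powr p)"
  using p by (intro continuous_on_powr' continuous_intros) auto

lemma g_cont: "continuous_on UNIV (\<lambda>x. \<bar>D x v\<bar> powr p)"
  using continuous_on_compose2[OF powp_cont D_cont[of v]] by simp

lemma g_eq: "\<bar>D x v\<bar> powr p = indicator S0 x *\<^sub>R (\<bar>D x v\<bar> powr p)"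
  using D_zero by (auto simp: indicator_def)

lemma g_int: "integrable lborel (\<lambda>x. \<bar>D x v\<bar> powr p)"
proof -
  have "integrable lborel (\<lambda>x. indicator S0 x *\<^sub>R (\<bar>D x v\<bar> powr p))"
    by (rule borel_integrable_compact[OF cptS]) (use continuous_on_subset[OF g_cont] in blast)
  then show ?thesis by (subst g_eq) simp
qed

lemma g_meas: "(\<lambda>x. \<bar>D x v\<bar> powr p) \<in> borel_measurable lborel"
  using borel_measurable_continuous_onI[OF g_cont] by simp

lemma I_cont: "continuous_on UNIV I"
proof -
  obtain M where M: "M \<ge> 0" "\<And>x v. \<bar>D x v\<bar> \<le> M * norm v" using D_bound by blast
  have "continuous (at a) I" for a
  proof (rule continuous_at_sequentiallyI)
    fix u assume u: "u \<longlonglongrightarrow> a"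
    then obtain K where K: "K > 0" "\<And>n. norm (u n) \<le> K"
      using convergent_imp_Bseq[of u] Bseq_def convergentI by blast
    show "(\<lambda>n. I (u n)) \<longlonglongrightarrow> I a"
      unfolding I_def
    proof (rule integral_dominated_convergence[where w="\<lambda>x. indicator S0 x *\<^sub>R ((M*K) powr p)"])
      show "(\<lambda>x. \<bar>D x a\<bar> powr p) \<in> borel_measurable lborel" by (rule g_meas)
      show "(\<lambda>x. \<bar>D x (u i)\<bar> powr p) \<in> borel_measurable lborel" for i by (rule g_meas)
      show "integrable lborel (\<lambda>x. indicator S0 x *\<^sub>R ((M*K) powr p))"
        by (rule borel_integrable_compact[OF cptS]) simp
      show "AE x in lborel. (\<lambda>i. \<bar>D x (u i)\<bar> powr p) \<longlonglongrightarrow> \<bar>D x a\<bar> powr p"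
      proof (rule AE_I2)
        fix x
        have "(\<lambda>i. D x (u i)) \<longlonglongrightarrow> D x a"
          using bounded_linear.tendsto[OF D_bl u] .
        then show "(\<lambda>i. \<bar>D x (u i)\<bar> powr p) \<longlonglongrightarrow> \<bar>D x a\<bar> powr p"
          using continuous_on_tendsto_compose[OF powp_cont] by auto
      qed
      show "AE x in lborel. norm (\<bar>D x (u i)\<bar> powr p) \<le> indicator S0 x *\<^sub>R ((M*K) powr p)" for i
      proof (rule AE_I2)
        fix x
        show "norm (\<bar>D x (u i)\<bar> powr p) \<le> indicator S0 x *\<^sub>R ((M*K) powr p)"
        proof (cases "x \<in> S0")
          case True
          have "\<bar>D x (u i)\<bar> \<le> M * K" using M K
            by (meson mult_left_mono order_trans)
          then have "\<bar>D x (u i)\<bar> powr p \<le> (M*K) powr p" using p by (intro powr_mono2) auto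
          then show ?thesis using True by simp
        next
          case False then show ?thesis using D_zero by simp
        qed
      qed
    qed
  qed
  then show ?thesis by (simp add: continuous_at_imp_continuous_on)
qed

lemma I_nonneg: "I v \<ge> 0" unfolding I_def by simp

lemma I_scale: "I (c *\<^sub>R v) = \<bar>c\<bar> powr p * I v"
proof -
  have "I (c *\<^sub>R v) = (\<integral>x. \<bar>c\<bar> powr p * \<bar>D x v\<bar> powr p \<partial>lborel)"
    unfolding I_def by (simp add: D_scale abs_mult powr_mult)
  then show ?thesis unfolding I_def by simp
qed

lemma gn: "grad_norm p f v = I v powr (1/p)"
  unfolding grad_norm_def dir_deriv_def I_def D_def ..

lemma I_pos: assumes "v \<noteq> 0" shows "I v > 0"
proof (rule ccontr)
  assume "\<not> I v > 0"
  then have "I v = 0" using I_nonneg[of v] by simp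
  then have "AE x in lborel. \<bar>D x v\<bar> powr p = 0"
    unfolding I_def using integral_nonneg_eq_0_iff_AE[OF g_int] by simp
  then have "AE x in lborel. x \<in> {x. D x v = 0}" by simp
  then have ae: "AE x \<in> UNIV in lebesgue. x \<in> {x. D x v = 0}"
    by (simp add: AE_completion)
  have cl: "closed {x. D x v = 0}"
    using closed_Collect_eq[OF D_cont continuous_on_const] by simp
  have Dz: "D x v = 0" for x
    using mem_closed_if_AE_lebesgue_open[OF open_UNIV cl ae] by simp
  obtain x0 where x0: "f x0 \<noteq> 0" using nz by blast
  let ?h = "\<lambda>t. f (x0 + t *\<^sub>R v)"
  have hd: "(?h has_derivative (\<lambda>s. 0)) (at t within UNIV)" for t
  proof -
    have 1: "((\<lambda>t. x0 + t *\<^sub>R v) has_derivative (\<lambda>s. s *\<^sub>R v)) (at t)"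
      by (intro derivative_eq_intros) auto
    have 2: "(f has_derivative D (x0 + t *\<^sub>R v)) (at (x0 + t *\<^sub>R v))"
      unfolding D_def[abs_def] using smooth_hasderiv[OF sm] by simp
    have "(?h has_derivative (\<lambda>s. D (x0 + t *\<^sub>R v) (s *\<^sub>R v))) (at t)"
      using has_derivative_compose[OF 1 2] by (simp add: o_def)
    moreover have "(\<lambda>s. D (x0 + t *\<^sub>R v) (s *\<^sub>R v)) = (\<lambda>s. 0)"
      by (simp add: D_scale Dz)
    ultimately show ?thesis by simp
  qed
  obtain c where c: "\<And>t. ?h t = c"
    using has_derivative_zero_constant[of UNIV ?h] hd by auto
  obtain R where R: "\<And>y. y \<in> S0 \<Longrightarrow> norm y \<le> R"
    using compact_imp_bounded[OF cptS] by (meson bounded_iff)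
  define t where "t = (\<bar>R\<bar> + norm x0 + 1) / norm v"
  have nv: "norm v > 0" using assms by simp
  have "norm (t *\<^sub>R v) = \<bar>R\<bar> + norm x0 + 1" unfolding t_def using nv by simp
  moreover have "norm (t *\<^sub>R v) \<le> norm (x0 + t *\<^sub>R v) + norm x0"
    by (metis add.commute add_diff_cancel_right' norm_triangle_ineq4)
  ultimately have "norm (x0 + t *\<^sub>R v) > R" by linarith
  then have "x0 + t *\<^sub>R v \<notin> S0" using R by (meson not_le)
  then have "f (x0 + t *\<^sub>R v) = 0" unfolding S0_def
    by (metis (mono_tags, lifting) closure_subset mem_Collect_eq subsetD)
  moreover have "f (x0 + 0 *\<^sub>R v) \<noteq> 0" using x0 by simp
  ultimately show False using c by metis
qed

abbreviation "N \<equiv> grad_norm p f"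

lemma N_eq: "N v = I v powr (1/p)" by (rule gn)

lemma N_cont: "continuous_on UNIV N"
  unfolding N_eq[abs_def] using p I_nonneg
  by (intro continuous_on_powr' I_cont continuous_intros) auto

lemma N_nonneg: "N v \<ge> 0" by (simp add: N_eq)

lemma N_scale: "N (c *\<^sub>R v) = \<bar>c\<bar> * N v"
  using p I_nonneg[of v] by (simp add: N_eq I_scale powr_mult powr_powr)

lemma N_pos: assumes "v \<noteq> 0" shows "N v > 0"
  using I_pos[OF assms] by (simp add: N_eq)

lemma N_zero: "N 0 = 0"
  using N_scale[of 0 0] by simp

lemma N_bounds: "\<exists>m B. m > 0 \<and> B > 0 \<and> (\<forall>v. m * norm v \<le> N v \<and> N v \<le> B * norm v)"
proof -
  have cs: "compact (sphere (0::'a) 1)" "sphere (0::'a) 1 \<noteq> {}" by auto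
  have cN: "continuous_on (sphere 0 1) N" using continuous_on_subset[OF N_cont] by blast
  obtain a where a: "a \<in> sphere 0 1" "\<And>y. y \<in> sphere 0 1 \<Longrightarrow> N a \<le> N y"
    using continuous_attains_inf[OF cs cN] by blast
  obtain b where b: "b \<in> sphere 0 1" "\<And>y. y \<in> sphere 0 1 \<Longrightarrow> N y \<le> N b"
    using continuous_attains_sup[OF cs cN] by blast
  have ma: "N a > 0" using a(1) N_pos by (metis norm_zero mem_sphere_0 zero_neq_one)
  have mb: "N b > 0" using b(1) N_pos by (metis norm_zero mem_sphere_0 zero_neq_one)
  have "N a * norm v \<le> N v \<and> N v \<le> N b * norm v" for v
  proof (cases "v = 0")
    case True then show ?thesis by (simp add: N_zero)
  next
    case False
    let ?u = "(1 / norm v) *\<^sub>R v"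
    have u: "?u \<in> sphere 0 1" using False by simp
    have "v = norm v *\<^sub>R ?u" using False by simp
    then have "N v = norm v * N ?u" by (metis N_scale abs_norm_cancel)
    then show ?thesis using a(2)[OF u] b(2)[OF u]
      by (simp add: mult.commute mult_left_mono)
  qed
  then show ?thesis using ma mb by blast
qed

lemma Lf_eq: "Lf p f = {v. N v \<le> 1}" unfolding Lf_def ..

lemma Lf_closed: "closed (Lf p f)"
  unfolding Lf_eq using closed_Collect_le[OF N_cont continuous_on_const] by simp

lemma Lf_meas: "Lf p f \<in> sets lborel"
  using Lf_closed by simp

lemma Lf_measure_pos: "0 < measure lborel (Lf p f)"
proof -
  obtain m B where mB: "m > 0" "B > 0" "\<And>v. m * norm v \<le> N v \<and> N v \<le> B * norm v"
    using N_bounds by blast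
  have sub1: "cball 0 (1/B) \<subseteq> Lf p f"
  proof
    fix v assume "v \<in> cball (0::'a) (1/B)"
    then have "norm v \<le> 1/B" by simp
    then have "B * norm v \<le> 1" using mB(2) by (simp add: field_simps)
    then show "v \<in> Lf p f" unfolding Lf_eq using mB(3)[of v] by simp
  qed
  have sub2: "Lf p f \<subseteq> cball 0 (1/m)"
  proof
    fix v assume "v \<in> Lf p f"
    then have "m * norm v \<le> 1" unfolding Lf_eq using mB(3)[of v] by simp
    then show "v \<in> cball (0::'a) (1/m)" using mB(1) by (simp add: field_simps)
  qed
  have "emeasure lborel (Lf p f) \<le> emeasure lborel (cball (0::'a) (1/m))"
    by (rule emeasure_mono[OF sub2]) simp
  then have fin: "emeasure lborel (Lf p f) < \<infinity>"
    using le_less_trans[OF _ emeasure_lborel_cball_finite] by blast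
  have "0 < emeasure lborel (cball (0::'a) (1/B))"
    using mB(2) by (simp add: emeasure_cball)
  also have "\<dots> \<le> emeasure lborel (Lf p f)" using emeasure_mono[OF sub1 Lf_meas] .
  finally have "0 < emeasure lborel (Lf p f)" .
  then show ?thesis using fin
    by (simp add: measure_def enn2real_positive_iff)
qed

end



lemma omega_pos: "k > -2 \<Longrightarrow> omega k > 0"
  unfolding omega_def by (intro divide_pos_pos Gamma_real_pos) auto

context setting begin

lemma Cstar_eq: "Cstar p f x = (real DIM('a) + p) * (LINT y:Lf p f|lborel. \<bar>x \<bullet> y\<bar> powr p)"
proof -
  have Nm [measurable]: "N \<in> borel_measurable borel" using borel_measurable_continuous_onI[OF N_cont] .
  define \<phi> where "\<phi> y = \<bar>x \<bullet> y\<bar> powr p" for y :: 'a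
  have \<phi>m [measurable]: "\<phi> \<in> borel_measurable borel" unfolding \<phi>_def[abs_def] by measurable
  have nrm [measurable]: "(\<lambda>x::'a. x /\<^sub>R norm x) \<in> borel_measurable borel" by measurable
  have [measurable]: "Measurable.pred borel (\<lambda>x::'a. x \<in> ball 0 1)" by (simp add: pred_def)
  have [measurable]: "(\<lambda>x::'a. N (x /\<^sub>R norm x)) \<in> borel_measurable borel"
    using measurable_compose[OF nrm Nm] by (simp add: o_def)
  have [measurable]: "(\<lambda>x::'a. \<phi> (x /\<^sub>R norm x)) \<in> borel_measurable borel"
    using measurable_compose[OF nrm \<phi>m] by (simp add: o_def)
  have \<phi>sc: "\<phi> (c *\<^sub>R v) = c powr p * \<phi> v" if "c > 0" for c v
    unfolding \<phi>_def using that by (simp add: abs_mult powr_mult)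
  have \<phi>0: "\<phi> 0 = 0" unfolding \<phi>_def by simp
  have pc: "ennreal (real DIM('a)) * (\<integral>\<^sup>+u. ennreal (indicator (ball 0 1) u *
            (N (u /\<^sub>R norm u) powr (- real DIM('a) - p) * \<phi> (u /\<^sub>R norm u))) \<partial>lborel)
       = ennreal (real DIM('a) + p) * (\<integral>\<^sup>+y. ennreal (indicator {y. N y \<le> 1} y * \<phi> y) \<partial>lborel)"
    by (rule polar_core[OF Nm \<phi>m N_scale N_pos _ \<phi>sc \<phi>0]) (use p in \<open>auto simp: \<phi>_def\<close>)
  have L: "(LINT u:ball 0 1|lborel. N (u /\<^sub>R norm u) powr (- real DIM('a) - p) * \<phi> (u /\<^sub>R norm u))
      = enn2real (\<integral>\<^sup>+u. ennreal (indicator (ball 0 1) u *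
            (N (u /\<^sub>R norm u) powr (- real DIM('a) - p) * \<phi> (u /\<^sub>R norm u))) \<partial>lborel)"
  proof -
    have m1: "(\<lambda>u. indicator (ball (0::'a) 1) u *\<^sub>R (N (u /\<^sub>R norm u) powr (- real DIM('a) - p) * \<phi> (u /\<^sub>R norm u)))
       \<in> borel_measurable lborel" by measurable
    show ?thesis
      unfolding set_lebesgue_integral_def by (subst integral_eq_nn_integral[OF m1]) (auto simp: \<phi>_def)
  qed
  have R: "(LINT y:Lf p f|lborel. \<phi> y)
      = enn2real (\<integral>\<^sup>+y. ennreal (indicator {y. N y \<le> 1} y * \<phi> y) \<partial>lborel)"
  proof -
    have m1: "(\<lambda>y. indicator {y. N y \<le> 1} y *\<^sub>R \<phi> y) \<in> borel_measurable lborel"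
      by measurable
    show ?thesis
      unfolding set_lebesgue_integral_def Lf_eq by (subst integral_eq_nn_integral[OF m1]) (auto simp: \<phi>_def)
  qed
  have "Cstar p f x = real DIM('a) * (LINT u:ball 0 1|lborel. N (u /\<^sub>R norm u) powr (- real DIM('a) - p) * \<phi> (u /\<^sub>R norm u))"
    unfolding Cstar_def sphere_integral_def \<phi>_def ..
  also have "\<dots> = enn2real (ennreal (real DIM('a)) * (\<integral>\<^sup>+u. ennreal (indicator (ball 0 1) u *
            (N (u /\<^sub>R norm u) powr (- real DIM('a) - p) * \<phi> (u /\<^sub>R norm u))) \<partial>lborel))"
    unfolding L by (simp add: enn2real_mult)
  also have "\<dots> = enn2real (ennreal (real DIM('a) + p) * (\<integral>\<^sup>+y. ennreal (indicator {y. N y \<le> 1} y * \<phi> y) \<partial>lborel))"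
    unfolding pc ..
  also have "\<dots> = (real DIM('a) + p) * (LINT y:Lf p f|lborel. \<phi> y)"
    unfolding R using p by (simp add: enn2real_mult)
  finally show ?thesis unfolding \<phi>_def .
qed

end




context setting begin

lemma main:
  assumes q: "q = p / (p - 1)"
  shows "Kf p f =
    (\<lambda>y. (((real DIM('a) + p) * measure lborel (Lf p f) * a1 p DIM('a)) powr (1 / p)
            * ell p q powr (- 1 / p)) *\<^sub>R y) ` Lp_centroid_body p (Lf p f)"
proof -
  define L where "L = Lf p f"
  define n where "n = real DIM('a)"
  define c where "c = (n + p) * measure lborel L * a1 p DIM('a)"
  define h where "h = centroid_support p L"
  define II where "II x = (LINT y:L|lborel. \<bar>x \<bullet> y\<bar> powr p)" for x
  define K where "K = c powr (1 / p) * ell p q powr (- 1 / p)"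
  have q1: "q > 1" using p q by (simp add: less_divide_eq)
  have a1: "a1 p DIM('a) > 0" unfolding a1_def using p
    by (intro divide_pos_pos mult_pos_pos omega_pos) auto
  have vol: "measure lborel L > 0" unfolding L_def by (rule Lf_measure_pos)
  have n: "n > 0" unfolding n_def by simp
  have c: "c > 0" unfolding c_def using a1 vol n p by simp
  have IInn: "II x \<ge> 0" for x unfolding II_def set_lebesgue_integral_def by (intro integral_nonneg_AE) (simp add: indicator_def)
  have hnn: "h x \<ge> 0" for x unfolding h_def centroid_support_def by simp
  have hp: "h x powr p = II x / (a1 p DIM('a) * measure lborel L)" for x
  proof -
    have "h x = (II x / (a1 p DIM('a) * measure lborel L)) powr (1/p)"
      unfolding h_def centroid_support_def II_def ..
    then have "h x powr p = (II x / (a1 p DIM('a) * measure lborel L)) powr (1/p * p)"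
      by (simp add: powr_powr)
    also have "1/p * p = 1" using p by simp
    finally show ?thesis using IInn[of x] a1 vol by simp
  qed
  have Cs: "Cstar p f x = c * h x powr p" for x
    unfolding Cstar_eq hp c_def II_def L_def n_def using a1 vol[unfolded L_def] by simp
  have IIsc: "II (t *\<^sub>R x) = t powr p * II x" if t: "t > 0" for t x
  proof -
    have "II (t *\<^sub>R x) = (LINT y:L|lborel. t powr p * \<bar>x \<bullet> y\<bar> powr p)"
      unfolding II_def using t by (simp add: abs_mult powr_mult)
    also have "\<dots> = t powr p * II x" unfolding II_def by (rule set_integral_mult_right)
    finally show ?thesis .
  qed
  have hsc: "h (t *\<^sub>R x) = t * h x" if t: "t > 0" for t x
  proof -
    have "h (t *\<^sub>R x) = (t powr p * (II x / (a1 p DIM('a) * measure lborel L))) powr (1/p)"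
      unfolding h_def centroid_support_def II_def[symmetric] IIsc[OF t] by simp
    also have "\<dots> = (t powr p) powr (1/p) * (II x / (a1 p DIM('a) * measure lborel L)) powr (1/p)"
      using t IInn[of x] a1 vol by (intro powr_mult; auto)
    also have "(t powr p) powr (1/p) = t" using t p by (simp add: powr_powr)
    finally show ?thesis unfolding h_def centroid_support_def II_def by simp
  qed
  have Klam: "K = (c*p) powr (1/p) * q powr (1/q)"
  proof -
    have e1: "ell p q powr (- 1 / p) = q powr (1/q) * p powr (1/p)"
    proof -
      have "ell p q powr (- 1 / p) = (q powr (- p / q)) powr (- 1 / p) / p powr (- 1 / p)"
        unfolding ell_def using p q1 by (intro powr_divide; auto)
      also have "(q powr (- p / q)) powr (- 1 / p) = q powr (1/q)"
        using p by (simp add: powr_powr)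
      also have "p powr (- 1 / p) = 1 / p powr (1/p)"
        using powr_minus_divide[of p "1/p"] by simp
      finally show ?thesis by simp
    qed
    show ?thesis unfolding K_def e1 using c p
      by (simp add: powr_mult mult_ac)
  qed
  have K0: "K > 0" unfolding Klam using c p q1 by simp
  have "y \<in> Kf p f \<longleftrightarrow> y \<in> (\<lambda>z. K *\<^sub>R z) ` Lp_centroid_body p L" for y
  proof -
    have "y \<in> Kf p f \<longleftrightarrow> (\<forall>x. x \<bullet> y - c * h x powr p \<le> 1)"
      unfolding Kf_def Cf_def by (simp add: SUP_le_iff Cs)
    also have "\<dots> \<longleftrightarrow> (\<forall>x. x \<bullet> y \<le> K * h x)"
      unfolding Klam by (rule legendre_aux[OF p q c hnn hsc])
    also have "\<dots> \<longleftrightarrow> y \<in> (\<lambda>z. K *\<^sub>R z) ` Lp_centroid_body p L"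
    proof
      assume H: "\<forall>x. x \<bullet> y \<le> K * h x"
      have "(1/K) *\<^sub>R y \<in> Lp_centroid_body p L"
        unfolding Lp_centroid_body_def h_def[symmetric]
      proof (intro CollectI allI)
        fix x
        have "x \<bullet> ((1/K) *\<^sub>R y) = (x \<bullet> y) / K" by simp
        also have "\<dots> \<le> h x" using H K0 by (simp add: divide_le_eq mult.commute)
        finally show "x \<bullet> ((1/K) *\<^sub>R y) \<le> h x" .
      qed
      moreover have "y = K *\<^sub>R ((1/K) *\<^sub>R y)" using K0 by simp
      ultimately show "y \<in> (\<lambda>z. K *\<^sub>R z) ` Lp_centroid_body p L" by blast
    next
      assume "y \<in> (\<lambda>z. K *\<^sub>R z) ` Lp_centroid_body p L"
      then obtain z where z: "z \<in> Lp_centroid_body p L" "y = K *\<^sub>R z" by blast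
      show "\<forall>x. x \<bullet> y \<le> K * h x"
      proof
        fix x
        have "x \<bullet> z \<le> h x" using z(1) unfolding Lp_centroid_body_def h_def by simp
        then show "x \<bullet> y \<le> K * h x" using z(2) K0 by (simp add: mult_left_mono)
      qed
    qed
    finally show ?thesis .
  qed
  then show ?thesis unfolding K_def c_def n_def L_def by blast
qed

end

theorem mainTheorem8:
  fixes f :: "'a::euclidean_space \<Rightarrow> real" and p q :: real
  assumes "p > 1" and "q = p / (p - 1)"
    and "smooth_fun f"
    and "compact (closure {x. f x \<noteq> 0})"
    and "\<exists>x. f x \<noteq> 0"
  shows "Kf p f =
    (\<lambda>y. (((real DIM('a) + p) * measure lborel (Lf p f) * a1 p DIM('a)) powr (1 / p)
            * ell p q powr (- 1 / p)) *\<^sub>R y) ` Lp_centroid_body p (Lf p f)"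
proof -
  interpret setting f p using assms by unfold_locales auto
  show ?thesis by (rule main[OF assms(2)])
qed


end
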